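(* Let $(X,d)$ be a complete metric space and $T\colon X\to X$ a mapping for which there exists $k<\kappa(X)$ such that for all $(x,y)\in X\times X$ with $D(x,o(y))\le D(x,o(x))$ and all $n\in\mathbb N$, $$\lim_{m\to\infty} D(T^nx,o(T^my))\le k\,D(x,o(y)).$$ Then either all the orbits are unbounded or there exists $x\in X$ with $Tx=x$.
   Context: The orbit of $x$ under $T$ is $o(x)=\{x\}\cup\{T^nx:n\in\mathbb N\}$; for nonempty $C\subseteq X$, $D(x,C)=\sup\{d(x,y):y\in C\}$. $B(x,r)$ denotes the closed ball. For $c\ge1$, balls in $X$ are $c$-regular if for every $k'<c$ there are $\mu,\alpha\in(0,1)$ such that for all $x,y\in X$ and $r>0$ with $d(x,y)\ge(1-\mu)r$ there exists $z\in X$ with $B(x,(1+\mu)r)\cap B(y,k'(1+\mu)r)\subseteq B(z,\alpha r)$. The Lifschitz characteristic is $\kappa(X)=\sup\{c\ge1:\text{balls in }X\text{ are }c\text{-regular}\}$. *)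

theory Defs
  imports "HOL-Analysis.Analysis" "HOL-Library.Extended_Real"
begin

definition orbit :: "('a \<Rightarrow> 'a) \<Rightarrow> 'a \<Rightarrow> 'a set" where
  "orbit T x = {x} \<union> {(T ^^ n) x | n. n \<ge> 1}"

definition Dsup :: "'a::metric_space \<Rightarrow> 'a set \<Rightarrow> ereal" where
  "Dsup x C = (SUP y\<in>C. ereal (dist x y))"

definition balls_regular :: "'a::metric_space itself \<Rightarrow> real \<Rightarrow> bool" where
  "balls_regular _ c \<longleftrightarrow>
     (\<forall>k'. k' < c \<longrightarrow>
        (\<exists>\<mu> \<alpha>. 0 < \<mu> \<and> \<mu> < 1 \<and> 0 < \<alpha> \<and> \<alpha> < 1 \<and>
          (\<forall>(x::'a) y r. r > 0 \<and> dist x y \<ge> (1 - \<mu>) * r \<longrightarrow>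
             (\<exists>z. cball x ((1 + \<mu>) * r) \<inter> cball y (k' * (1 + \<mu>) * r) \<subseteq> cball z (\<alpha> * r)))))"

definition lifschitz_char :: "'a::metric_space itself \<Rightarrow> ereal" where
  "lifschitz_char A = Sup {ereal c | c. c \<ge> 1 \<and> balls_regular A c}"

end

theory Submission
  imports Defs
begin

lemma orbit_eq: "orbit T x = range (\<lambda>n. (T ^^ n) x)"
proof (rule set_eqI)
  fix z
  show "z \<in> orbit T x \<longleftrightarrow> z \<in> range (\<lambda>n. (T ^^ n) x)"
  proof
    assume "z \<in> orbit T x" then show "z \<in> range (\<lambda>n. (T ^^ n) x)"
      unfolding orbit_def by (auto intro: range_eqI[of _ _ 0])
  next
    assume "z \<in> range (\<lambda>n. (T ^^ n) x)"
    then obtain n where n: "z = (T ^^ n) x" by auto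
    show "z \<in> orbit T x"
    proof (cases n)
      case 0 then show ?thesis using n by (simp add: orbit_def)
    next
      case (Suc m) then have "z \<in> {(T ^^ n) x |n. 1 \<le> n}" using n by (intro CollectI exI[of _ n]) simp
      then show ?thesis unfolding orbit_def by blast
    qed
  qed
qed

lemma Dsup_orbit: "Dsup x (orbit T y) = (SUP n. ereal (dist x ((T ^^ n) y)))"
  by (simp add: Dsup_def orbit_eq image_image)

lemma funpow_shift: "(T ^^ a) ((T ^^ m) y) = (T ^^ (a + m)) y"
  by (simp add: funpow_add)

lemma cond_lemma:
  assumes "\<forall>a. dist x ((T ^^ a) y) \<le> B" "B \<le> dist x ((T ^^ n0) x)"
  shows "Dsup x (orbit T y) \<le> Dsup x (orbit T x)"
proof -
  have "Dsup x (orbit T y) \<le> ereal B"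
    unfolding Dsup_orbit using assms(1) by (auto intro!: SUP_least)
  also have "\<dots> \<le> ereal (dist x ((T ^^ n0) x))" using assms(2) by simp
  also have "\<dots> \<le> Dsup x (orbit T x)" unfolding Dsup_orbit by (rule SUP_upper) simp
  finally show ?thesis .
qed

locale lif =
  fixes T :: "'a::complete_space \<Rightarrow> 'a" and k kp k' \<mu> \<alpha> :: real
  assumes kp_def: "kp = max k 0" and kp_lt: "kp < k'"
    and mu0: "0 < \<mu>" and mu1: "\<mu> < 1" and al0: "0 < \<alpha>" and al1: "\<alpha> < 1"
    and reg: "\<And>(x::'a) y r. r > 0 \<Longrightarrow> dist x y \<ge> (1 - \<mu>) * r \<Longrightarrow>
       \<exists>z. cball x ((1 + \<mu>) * r) \<inter> cball y (k' * (1 + \<mu>) * r) \<subseteq> cball z (\<alpha> * r)"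
    and H: "\<And>x y n. Dsup x (orbit T y) \<le> Dsup x (orbit T x) \<Longrightarrow> n \<ge> 1 \<Longrightarrow>
           lim (\<lambda>m. Dsup ((T ^^ n) x) (orbit T ((T ^^ m) y))) \<le> ereal k * Dsup x (orbit T y)"
begin

lemma kp0: "0 \<le> kp" using kp_def by simp

lemma H':
  assumes n: "n \<ge> 1" and B: "\<forall>a. dist x ((T ^^ a) y) \<le> B"
    and c: "Dsup x (orbit T y) \<le> Dsup x (orbit T x)" and e: "\<epsilon> > 0"
  shows "\<exists>m. \<forall>a\<ge>m. dist ((T ^^ n) x) ((T ^^ a) y) \<le> kp * B + \<epsilon>"
proof -
  define f where "f = (\<lambda>m. Dsup ((T ^^ n) x) (orbit T ((T ^^ m) y)))"
  have f_eq: "f m = (SUP a. ereal (dist ((T ^^ n) x) ((T ^^ (a + m)) y)))" for m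
    by (simp add: f_def Dsup_orbit funpow_shift)
  have dec: "decseq f"
    unfolding decseq_Suc_iff
  proof
    fix m
    show "f (Suc m) \<le> f m" unfolding f_eq
    proof (rule SUP_mono)
      fix a show "\<exists>a'\<in>UNIV. ereal (dist ((T ^^ n) x) ((T ^^ (a + Suc m)) y))
          \<le> ereal (dist ((T ^^ n) x) ((T ^^ (a' + m)) y))"
        by (rule bexI[of _ "Suc a"]) auto
    qed
  qed
  have "f \<longlonglongrightarrow> (INF m. f m)" by (rule LIMSEQ_INF[OF dec])
  then have "lim f = (INF m. f m)" by (rule limI)
  with H[OF c n] have I: "(INF m. f m) \<le> ereal k * Dsup x (orbit T y)" by (simp add: f_def)
  have D1: "Dsup x (orbit T y) \<le> ereal B"
    unfolding Dsup_orbit using B by (auto intro!: SUP_least)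
  have D0: "ereal 0 \<le> Dsup x (orbit T y)"
    unfolding Dsup_orbit by (rule SUP_upper2[of 0]) auto
  from D0 D1 obtain d where d: "Dsup x (orbit T y) = ereal d" "0 \<le> d" "d \<le> B"
    by (cases "Dsup x (orbit T y)") auto
  have "k * d \<le> kp * d" using d kp_def by (simp add: mult_right_mono)
  also have "\<dots> \<le> kp * B" using d kp0 by (simp add: mult_left_mono)
  finally have "(INF m. f m) \<le> ereal (kp * B)" using I d by (metis ereal_less_eq(3) order_trans times_ereal.simps(1))
  also have "\<dots> < ereal (kp * B + \<epsilon>)" using e by simp
  finally obtain m where m: "f m < ereal (kp * B + \<epsilon>)" by (auto simp: INF_less_iff)
  show ?thesis
  proof (intro exI allI impI)
    fix a assume "m \<le> a"
    then have "a = (a - m) + m" by simp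
    then have "ereal (dist ((T ^^ n) x) ((T ^^ a) y)) \<le> f m"
      unfolding f_eq by (metis (no_types, lifting) SUP_upper UNIV_I)
    from le_less_trans[OF this m] show "dist ((T ^^ n) x) ((T ^^ a) y) \<le> kp * B + \<epsilon>" by simp
  qed
qed

definition AB where "AB y z t \<longleftrightarrow> (\<exists>m. \<forall>a\<ge>m. dist z ((T ^^ a) y) \<le> t)"
definition rad where "rad y = Inf {t. \<exists>z. AB y z t}"

lemma AB_nonneg: "AB y z t \<Longrightarrow> 0 \<le> t"
  unfolding AB_def by (meson order_refl order_trans zero_le_dist)

lemma rad_le: "AB y z t \<Longrightarrow> rad y \<le> t"
proof -
  have "bdd_below {t. \<exists>z. AB y z t}" by (rule bdd_belowI[of _ 0]) (auto intro: AB_nonneg)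
  then show "AB y z t \<Longrightarrow> rad y \<le> t" unfolding rad_def by (auto intro: cInf_lower)
qed

lemma rad_lessD:
  assumes "\<forall>n. dist y ((T ^^ n) y) \<le> B" "rad y < e"
  shows "\<exists>z t. AB y z t \<and> t < e"
proof -
  have "AB y y B" unfolding AB_def using assms(1) by auto
  then have "{t. \<exists>z. AB y z t} \<noteq> {}" by auto
  from cInf_lessD[OF this] assms(2) show ?thesis unfolding rad_def by blast
qed

lemma fixL:
  assumes "\<And>\<epsilon>. \<epsilon> > 0 \<Longrightarrow> \<exists>w. \<forall>n. dist p ((T ^^ n) w) \<le> \<epsilon>"
  shows "T p = p"
proof (rule ccontr)
  assume "T p \<noteq> p"
  define \<delta> where "\<delta> = dist p (T p)"
  have d0: "\<delta> > 0" using \<open>T p \<noteq> p\<close> by (simp add: \<delta>_def)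
  define \<epsilon> where "\<epsilon> = \<delta> / (kp + 3)"
  have e0: "\<epsilon> > 0" using d0 kp0 by (simp add: \<epsilon>_def)
  have dk: "0 \<le> \<delta> * kp" using d0 kp0 by simp
  then have ed: "\<epsilon> < \<delta>" using d0 kp0 by (simp add: \<epsilon>_def field_simps) (use dk d0 in linarith)
  obtain w where w: "\<forall>n. dist p ((T ^^ n) w) \<le> \<epsilon>" using assms[OF e0] by blast
  have c: "Dsup p (orbit T w) \<le> Dsup p (orbit T p)"
    by (rule cond_lemma[of p T w \<epsilon> 1]) (use w ed in \<open>auto simp: \<delta>_def\<close>)
  obtain m where m: "\<forall>a\<ge>m. dist ((T ^^ 1) p) ((T ^^ a) w) \<le> kp * \<epsilon> + \<epsilon>"
    using H'[of 1 p w \<epsilon> \<epsilon>] w c e0 by auto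
  have "\<delta> \<le> dist p ((T ^^ m) w) + dist ((T ^^ m) w) (T p)"
    unfolding \<delta>_def by (rule dist_triangle)
  also have "\<dots> \<le> \<epsilon> + (kp * \<epsilon> + \<epsilon>)"
    using w m by (intro add_mono) (auto simp: dist_commute)
  also have "\<dots> < \<delta>"
  proof -
    have "(kp + 3) * \<epsilon> = \<delta>" using kp0 by (simp add: \<epsilon>_def)
    then have "kp * \<epsilon> + 3 * \<epsilon> = \<delta>" by (simp add: algebra_simps)
    then show ?thesis using e0 by linarith
  qed
  finally show False by simp
qed

lemma lemZ:
  assumes B: "\<forall>n. dist y ((T ^^ n) y) \<le> B" and r: "rad y \<le> 0"
  shows "\<exists>p. T p = p"
proof -
  define g where "g = (\<lambda>a. (T ^^ a) y)"
  have small: "\<exists>z m. \<forall>a\<ge>m. dist z (g a) \<le> e" if "e > 0" for e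
  proof -
    from rad_lessD[OF B, of e] r that obtain z t where "AB y z t" "t < e" by force
    then show ?thesis unfolding AB_def g_def by (meson less_imp_le order_trans)
  qed
  have C: "Cauchy g"
    unfolding Cauchy_def
  proof (intro allI impI)
    fix e :: real assume "e > 0"
    then obtain z m where zm: "\<forall>a\<ge>m. dist z (g a) \<le> e/3" using small[of "e/3"] by auto
    show "\<exists>M. \<forall>a\<ge>M. \<forall>b\<ge>M. dist (g a) (g b) < e"
    proof (intro exI allI impI)
      fix a b assume "m \<le> a" "m \<le> b"
      have "dist (g a) (g b) \<le> dist z (g a) + dist z (g b)" by (rule dist_triangle3)
      also have "\<dots> \<le> e/3 + e/3" using zm \<open>m \<le> a\<close> \<open>m \<le> b\<close> by (intro add_mono) auto
      also have "\<dots> < e" using \<open>e > 0\<close> by simp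
      finally show "dist (g a) (g b) < e" .
    qed
  qed
  then obtain p where p: "g \<longlonglongrightarrow> p" using Cauchy_convergent convergent_def by blast
  have "T p = p"
  proof (rule fixL)
    fix \<epsilon> :: real assume e: "\<epsilon> > 0"
    from C e obtain M where M: "\<forall>a\<ge>M. \<forall>b\<ge>M. dist (g a) (g b) < \<epsilon>/2"
      unfolding Cauchy_def by (meson half_gt_zero)
    from p e obtain N where N: "\<forall>b\<ge>N. dist (g b) p < \<epsilon>/2"
      unfolding lim_sequentially by (meson half_gt_zero)
    show "\<exists>w. \<forall>n. dist p ((T ^^ n) w) \<le> \<epsilon>"
    proof (intro exI allI)
      fix n
      have eq: "(T ^^ n) (g M) = g (n + M)" by (simp add: g_def funpow_shift)
      have "dist p (g (n + M)) \<le> dist (g (max N M)) p + dist (g (max N M)) (g (n + M))"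
        by (rule dist_triangle3)
      also have "\<dots> < \<epsilon>/2 + \<epsilon>/2" using M N by (intro add_strict_mono) auto
      finally show "dist p ((T ^^ n) (g M)) \<le> \<epsilon>" using eq by simp
    qed
  qed
  then show ?thesis by blast
qed

lemma lemS:
  assumes r: "rad y > 0" and ab: "AB y z t0" and t0: "t0 < (1 + \<mu>) * rad y"
  shows "dist z ((T ^^ n) z) \<le> t0"
proof (rule ccontr)
  assume big: "\<not> dist z ((T ^^ n) z) \<le> t0"
  define r where "r = rad y"
  have r0: "r > 0" using r by (simp add: r_def)
  from ab obtain m where hm: "\<forall>a\<ge>m. dist z ((T ^^ a) y) \<le> t0" unfolding AB_def by blast
  have t0r: "r \<le> t0" using rad_le[OF ab] by (simp add: r_def)
  have t0m: "t0 \<le> (1 + \<mu>) * r" using t0 by (simp add: r_def)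
  have hm': "\<forall>a. dist z ((T ^^ a) ((T ^^ m) y)) \<le> t0" using hm by (simp add: funpow_shift)
  have c: "Dsup z (orbit T ((T ^^ m) y)) \<le> Dsup z (orbit T z)"
    by (rule cond_lemma[of z T "(T ^^ m) y" t0 n]) (use hm' big in auto)
  have small: "dist z ((T ^^ n') z) < (1 - \<mu>) * r" if n': "n' \<ge> 1" for n'
  proof (rule ccontr)
    assume "\<not> dist z ((T ^^ n') z) < (1 - \<mu>) * r"
    then have dz: "dist z ((T ^^ n') z) \<ge> (1 - \<mu>) * r" by simp
    define \<epsilon> where "\<epsilon> = k' * (1 + \<mu>) * r - kp * t0"
    have "kp * t0 \<le> kp * ((1 + \<mu>) * r)" using t0m kp0 by (rule mult_left_mono)
    also have "\<dots> < k' * (1 + \<mu>) * r" using kp_lt r0 mu0 by simp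
    finally have e0: "\<epsilon> > 0" by (simp add: \<epsilon>_def)
    obtain m' where m': "\<forall>a\<ge>m'. dist ((T ^^ n') z) ((T ^^ a) ((T ^^ m) y)) \<le> kp * t0 + \<epsilon>"
      using H'[OF n' hm' c e0] by blast
    obtain w where w: "cball z ((1 + \<mu>) * r) \<inter> cball ((T ^^ n') z) (k' * (1 + \<mu>) * r) \<subseteq> cball w (\<alpha> * r)"
      using reg[OF r0 dz] by blast
    have "AB y w (\<alpha> * r)" unfolding AB_def
    proof (intro exI allI impI)
      fix a assume a: "m' + m \<le> a"
      then have aeq: "(T ^^ a) y = (T ^^ (a - m)) ((T ^^ m) y)" by (simp add: funpow_shift)
      have "dist z ((T ^^ a) y) \<le> t0" using hm a by simp
      then have "(T ^^ a) y \<in> cball z ((1 + \<mu>) * r)" using t0m by simp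
      moreover have "(T ^^ a) y \<in> cball ((T ^^ n') z) (k' * (1 + \<mu>) * r)"
        using m'[rule_format, of "a - m"] a aeq by (simp add: \<epsilon>_def)
      ultimately show "dist w ((T ^^ a) y) \<le> \<alpha> * r" using w by auto
    qed
    then have "r \<le> \<alpha> * r" using rad_le by (simp add: r_def)
    then show False using al1 r0 by simp
  qed
  have "n \<noteq> 0" using big AB_nonneg[OF ab] by (cases n) auto
  then have "dist z ((T ^^ n) z) < (1 - \<mu>) * r" using small by simp
  also have "\<dots> \<le> r" using mu0 r0 by simp
  finally show False using big t0r by simp
qed

lemma lemDec:
  assumes R: "\<forall>n. dist z ((T ^^ n) z) \<le> R" and R0: "R > 0"
  shows "rad z \<le> max \<alpha> (1 - \<mu>) * R"
proof -
  define s where "s = R / (1 + \<mu>)"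
  have s0: "s > 0" using R0 mu0 by (simp add: s_def)
  have sR: "(1 + \<mu>) * s = R" using mu0 by (simp add: s_def)
  have sle: "s \<le> R" using R0 mu0 by (simp add: s_def field_simps)
  show ?thesis
  proof (cases "\<exists>n\<ge>1. dist z ((T ^^ n) z) \<ge> (1 - \<mu>) * s")
    case True
    then obtain n where n: "n \<ge> 1" "dist z ((T ^^ n) z) \<ge> (1 - \<mu>) * s" by blast
    have e0: "(k' - kp) * R > 0" using kp_lt R0 by simp
    obtain m where m: "\<forall>a\<ge>m. dist ((T ^^ n) z) ((T ^^ a) z) \<le> kp * R + (k' - kp) * R"
      using H'[OF n(1) R order_refl e0] by blast
    obtain w where w: "cball z ((1 + \<mu>) * s) \<inter> cball ((T ^^ n) z) (k' * (1 + \<mu>) * s) \<subseteq> cball w (\<alpha> * s)"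
      using reg[OF s0 n(2)] by blast
    have "AB z w (\<alpha> * s)" unfolding AB_def
    proof (intro exI allI impI)
      fix a assume a: "m \<le> a"
      have "(T ^^ a) z \<in> cball z ((1 + \<mu>) * s)" using R sR by simp
      moreover have "(T ^^ a) z \<in> cball ((T ^^ n) z) (k' * (1 + \<mu>) * s)"
      proof -
        have e1: "k' * (1 + \<mu>) * s = k' * R" using sR by (simp add: mult.assoc)
        have e2: "kp * R + (k' - kp) * R = k' * R" by (simp add: algebra_simps)
        have "dist ((T ^^ n) z) ((T ^^ a) z) \<le> kp * R + (k' - kp) * R" using m a by simp
        then show ?thesis unfolding mem_cball e1 e2 .
      qed
      ultimately show "dist w ((T ^^ a) z) \<le> \<alpha> * s" using w by auto
    qed
    then have "rad z \<le> \<alpha> * s" by (rule rad_le)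
    also have "\<dots> \<le> \<alpha> * R" using sle al0 by simp
    also have "\<dots> \<le> max \<alpha> (1 - \<mu>) * R" using R0 by (simp add: mult_right_mono)
    finally show ?thesis .
  next
    case False
    have "AB z z ((1 - \<mu>) * s)" unfolding AB_def
    proof (intro exI allI impI)
      fix a :: nat assume "0 \<le> a"
      show "dist z ((T ^^ a) z) \<le> (1 - \<mu>) * s"
      proof (cases a)
        case 0 then show ?thesis using mu1 s0 by simp
      next
        case (Suc b)
        then have "a \<ge> 1" by simp
        then have "\<not> dist z ((T ^^ a) z) \<ge> (1 - \<mu>) * s" using False by blast
        then show ?thesis by simp
      qed
    qed
    then have "rad z \<le> (1 - \<mu>) * s" by (rule rad_le)
    also have "\<dots> \<le> (1 - \<mu>) * R" using sle mu1 by simp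
    also have "\<dots> \<le> max \<alpha> (1 - \<mu>) * R" using R0 by (simp add: mult_right_mono)
    finally show ?thesis .
  qed
qed

lemma main:
  assumes B0: "\<forall>n. dist x0 ((T ^^ n) x0) \<le> B0"
  shows "\<exists>p. T p = p"
proof (rule ccontr)
  assume nf: "\<not> (\<exists>p. T p = p)"
  have pos: "0 < t" if "\<forall>n. dist y ((T ^^ n) y) \<le> t" for y t
  proof -
    have "0 < dist y (T y)" using nf by (metis zero_less_dist_iff)
    also have "\<dots> \<le> t" using that[rule_format, of 1] by simp
    finally show ?thesis .
  qed
  have radpos: "0 < rad y" if "\<forall>n. dist y ((T ^^ n) y) \<le> t" for y t
    using lemZ[OF that] nf by force
  define \<beta> where "\<beta> = max \<alpha> (1 - \<mu>)"
  have b0: "0 < \<beta>" "\<beta> < 1" using al0 al1 mu0 mu1 by (auto simp: \<beta>_def)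
  define e where "e = min \<mu> ((1 - \<beta>) / (2 * \<beta>))"
  have e0: "0 < e" "e \<le> \<mu>" "e \<le> (1 - \<beta>) / (2 * \<beta>)" using b0 mu0 by (auto simp: e_def)
  define q where "q = (1 + e) * \<beta>"
  have q0: "0 < q" using b0 e0 by (simp add: q_def)
  have "e * \<beta> \<le> (1 - \<beta>) / 2" using e0(3) b0 by (simp add: field_simps)
  then have q1: "q < 1" using b0 by (simp add: q_def algebra_simps)
  define P where "P = (\<lambda>(y, t) (z, t'). (\<forall>n. dist z ((T ^^ n) z) \<le> t') \<and> t' \<le> q * t \<and> dist y z \<le> 2 * t)"
  have step: "\<exists>zt. P (y, t) zt" if yt: "\<forall>n. dist y ((T ^^ n) y) \<le> t" for y t
  proof -
    have t0: "0 < t" using pos[OF yt] .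
    have r0: "0 < rad y" using radpos[OF yt] .
    have rb: "rad y \<le> \<beta> * t" using lemDec[OF yt t0] by (simp add: \<beta>_def)
    have "rad y < (1 + e) * rad y" using r0 e0 by simp
    then obtain z t' where zt: "AB y z t'" "t' < (1 + e) * rad y" using rad_lessD[OF yt] by blast
    have "(1 + e) * rad y \<le> (1 + \<mu>) * rad y" using e0 r0 by simp
    then have zb: "\<forall>n. dist z ((T ^^ n) z) \<le> t'" using lemS[OF r0 zt(1)] zt(2) by simp
    have "(1 + e) * rad y \<le> (1 + e) * (\<beta> * t)" using rb e0 by simp
    then have tq: "t' \<le> q * t" using zt(2) by (simp add: q_def)
    from zt(1) obtain m where "\<forall>a\<ge>m. dist z ((T ^^ a) y) \<le> t'" unfolding AB_def by blast
    then have "dist z ((T ^^ m) y) \<le> t'" by simp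
    moreover have "dist y ((T ^^ m) y) \<le> t" using yt by simp
    moreover have "q * t \<le> t" using q1 t0 by simp
    ultimately have "dist y z \<le> 2 * t" using tq dist_triangle3[of y z "(T ^^ m) y"] dist_commute[of "(T ^^ m) y" y] dist_commute[of "(T ^^ m) y" z] by linarith
    then show ?thesis using zb tq unfolding P_def by auto
  qed
  define s where "s = rec_nat (x0, B0) (\<lambda>_ yt. SOME zt. P yt zt)"
  define xs where "xs n = fst (s n)" for n
  define ts where "ts n = snd (s n)" for n
  have s0: "s 0 = (x0, B0)" by (simp add: s_def)
  have sS: "s (Suc n) = (SOME zt. P (s n) zt)" for n by (simp add: s_def)
  have inv: "\<forall>m. dist (xs n) ((T ^^ m) (xs n)) \<le> ts n" for n
  proof (induction n)
    case 0 then show ?case using B0 by (simp add: xs_def ts_def s0)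
  next
    case (Suc n)
    have "\<exists>zt. P (xs n, ts n) zt" using step[OF Suc.IH] .
    then have "P (xs n, ts n) (s (Suc n))" unfolding sS xs_def ts_def by (simp add: someI_ex)
    then show ?case unfolding P_def xs_def ts_def by (cases "s (Suc n)") auto
  qed
  have Pn: "P (xs n, ts n) (xs (Suc n), ts (Suc n))" for n
  proof -
    have "\<exists>zt. P (xs n, ts n) zt" using step[OF inv] .
    then have "P (xs n, ts n) (s (Suc n))" unfolding sS xs_def ts_def by (simp add: someI_ex)
    then show ?thesis by (simp add: xs_def ts_def)
  qed
  have tsq: "ts (Suc n) \<le> q * ts n" and dxs: "dist (xs n) (xs (Suc n)) \<le> 2 * ts n" for n
    using Pn[of n] unfolding P_def by auto
  have tspos: "0 < ts n" for n using pos[OF inv] .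
  have tsb: "ts n \<le> q ^ n * B0" for n
  proof (induction n)
    case 0 then show ?case by (simp add: ts_def s0)
  next
    case (Suc n)
    have "ts (Suc n) \<le> q * ts n" by (rule tsq)
    also have "\<dots> \<le> q * (q ^ n * B0)" using Suc q0 by simp
    finally show ?case by simp
  qed
  have B0pos: "0 < B0" using tspos[of 0] by (simp add: ts_def s0)
  have dsum: "dist (xs n) (xs (n + d)) \<le> 2 * B0 * (q ^ n - q ^ (n + d)) / (1 - q)" for n d
  proof (induction d)
    case 0 then show ?case by simp
  next
    case (Suc d)
    have "dist (xs n) (xs (n + Suc d)) \<le> dist (xs n) (xs (n + d)) + dist (xs (n + d)) (xs (Suc (n + d)))"
      by (simp add: dist_triangle)
    also have "\<dots> \<le> 2 * B0 * (q ^ n - q ^ (n + d)) / (1 - q) + 2 * (q ^ (n + d) * B0)"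
      using Suc.IH dxs[of "n + d"] tsb[of "n + d"] by linarith
    also have "\<dots> = 2 * B0 * (q ^ n - q ^ (n + Suc d)) / (1 - q)"
      using q1 by (simp add: field_simps)
    finally show ?case .
  qed
  have dle: "dist (xs n) (xs m) \<le> 2 * B0 * q ^ N / (1 - q)" if Nn: "N \<le> n" and nm: "n \<le> m" for n m N
  proof -
    obtain d where m: "m = n + d" using le_Suc_ex[OF nm] by blast
    have "dist (xs n) (xs m) \<le> 2 * B0 * (q ^ n - q ^ (n + d)) / (1 - q)" using dsum[of n d] m by simp
    also have "\<dots> \<le> 2 * B0 * q ^ n / (1 - q)"
      using q0 q1 B0pos by (intro divide_right_mono mult_left_mono) auto
    also have "\<dots> \<le> 2 * B0 * q ^ N / (1 - q)"
      using q0 q1 B0pos Nn by (intro divide_right_mono mult_left_mono power_decreasing) auto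
    finally show ?thesis .
  qed
  have C: "Cauchy xs"
    unfolding Cauchy_def
  proof (intro allI impI)
    fix \<epsilon> :: real assume "\<epsilon> > 0"
    then have "0 < \<epsilon> * (1 - q) / (2 * B0 + 1)" using q1 B0pos by simp
    then obtain N where N: "q ^ N < \<epsilon> * (1 - q) / (2 * B0 + 1)" using real_arch_pow_inv[OF _ q1] by blast
    have "2 * B0 * q ^ N / (1 - q) < \<epsilon>"
    proof -
      have "(2 * B0) * q ^ N \<le> (2 * B0 + 1) * q ^ N" using q0 by simp
      also have "\<dots> < (2 * B0 + 1) * (\<epsilon> * (1 - q) / (2 * B0 + 1))"
        using N B0pos by (intro mult_strict_left_mono) auto
      also have "\<dots> = \<epsilon> * (1 - q)" using B0pos by simp
      finally show ?thesis using q1 by (simp add: field_simps)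
    qed
    then show "\<exists>M. \<forall>m\<ge>M. \<forall>n\<ge>M. dist (xs m) (xs n) < \<epsilon>"
    proof (intro exI allI impI)
      fix m n assume mn: "N \<le> m" "N \<le> n" and lt: "2 * B0 * q ^ N / (1 - q) < \<epsilon>"
      show "dist (xs m) (xs n) < \<epsilon>"
      proof (cases "m \<le> n")
        case True then show ?thesis using dle[OF mn(1) True] lt by linarith
      next
        case False then have nm': "n \<le> m" by simp
        then show ?thesis using dle[OF mn(2) nm'] lt dist_commute[of "xs m" "xs n"] by linarith
      qed
    qed
  qed
  then obtain p where p: "xs \<longlonglongrightarrow> p" using Cauchy_convergent convergent_def by blast
  have "T p = p"
  proof (rule fixL)
    fix \<epsilon> :: real assume e: "\<epsilon> > 0"
    from p e obtain N1 where N1: "\<forall>j\<ge>N1. dist (xs j) p < \<epsilon>/2"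
      unfolding lim_sequentially by (meson half_gt_zero)
    have "0 < \<epsilon> / 2 / B0" using e B0pos by simp
    then obtain N2 where N2: "q ^ N2 < \<epsilon> / 2 / B0" using real_arch_pow_inv[OF _ q1] by blast
    define j where "j = max N1 N2"
    have "ts j \<le> q ^ j * B0" by (rule tsb)
    also have "\<dots> \<le> q ^ N2 * B0" using q0 q1 B0pos by (intro mult_right_mono power_decreasing) (auto simp: j_def)
    also have "\<dots> \<le> \<epsilon> / 2" using N2 B0pos by (simp add: field_simps)
    finally have tj: "ts j \<le> \<epsilon> / 2" .
    show "\<exists>w. \<forall>n. dist p ((T ^^ n) w) \<le> \<epsilon>"
    proof (intro exI allI)
      fix n
      have "dist p ((T ^^ n) (xs j)) \<le> dist (xs j) p + dist (xs j) ((T ^^ n) (xs j))"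
        by (rule dist_triangle3)
      also have "\<dots> \<le> \<epsilon>/2 + \<epsilon>/2"
      proof (rule add_mono)
        have "j \<ge> N1" by (simp add: j_def)
        then show "dist (xs j) p \<le> \<epsilon>/2" using N1 by (simp add: less_imp_le)
        show "dist (xs j) ((T ^^ n) (xs j)) \<le> \<epsilon>/2" using inv[of j] tj by (meson order_trans)
      qed
      finally show "dist p ((T ^^ n) (xs j)) \<le> \<epsilon>" by simp
    qed
  qed
  then show False using nf by blast
qed

end

theorem corollary4p4:
  fixes T :: "'a::complete_space \<Rightarrow> 'a" and k :: real
  assumes "ereal k < lifschitz_char TYPE('a)"
    and "\<And>x y n. Dsup x (orbit T y) \<le> Dsup x (orbit T x) \<Longrightarrow> n \<ge> 1 \<Longrightarrow>
           lim (\<lambda>m. Dsup ((T ^^ n) x) (orbit T ((T ^^ m) y))) \<le> ereal k * Dsup x (orbit T y)"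
  shows "(\<forall>x. \<not> bounded (orbit T x)) \<or> (\<exists>x. T x = x)"
proof (cases "\<forall>x. \<not> bounded (orbit T x)")
  case True then show ?thesis by blast
next
  case False
  then obtain x0 where bx: "bounded (orbit T x0)" by blast
  then obtain B0 where B0: "\<forall>y\<in>orbit T x0. dist x0 y \<le> B0"
    using bounded_any_center[of _ x0] by blast
  then have B0': "\<forall>n. dist x0 ((T ^^ n) x0) \<le> B0" by (simp add: orbit_eq)
  from assms(1) obtain c where c: "c \<ge> 1" "balls_regular TYPE('a) c" "ereal k < ereal c"
    unfolding lifschitz_char_def less_Sup_iff by blast
  define kp where "kp = max k 0"
  define k' where "k' = (kp + c) / 2"
  have kpc: "kp < c" using c by (simp add: kp_def)
  have "k' < c" using kpc by (simp add: k'_def)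
  with c(2) obtain \<mu> \<alpha> where ma: "0 < \<mu>" "\<mu> < 1" "0 < \<alpha>" "\<alpha> < 1"
    "\<forall>(x::'a) y r. r > 0 \<and> dist x y \<ge> (1 - \<mu>) * r \<longrightarrow>
             (\<exists>z. cball x ((1 + \<mu>) * r) \<inter> cball y (k' * (1 + \<mu>) * r) \<subseteq> cball z (\<alpha> * r))"
    unfolding balls_regular_def by blast
  interpret L: lif T k kp k' \<mu> \<alpha>
  proof
    show "kp = max k 0" by (simp add: kp_def)
    show "kp < k'" using kpc by (simp add: k'_def)
  qed (use ma assms(2) in auto)
  from L.main[OF B0'] show ?thesis by blast
qed

end
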